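(* Assume (FWW) for a flow $\Phi_t$ on $\mathbb{R}^n$ and a $k$-cone $C$. Let $\mathcal{D}\subset\mathbb{R}^n$ be open and $\omega$-compact, let $x\in\mathcal{D}$, and consider the $k$-exponential separation of $(\Phi_t,D\Phi_t)$ along $\omega(x)$ associated with $C$. If $\lambda_{kz}>0$ for every $z\in\omega(x)$, then $x\in\overline{Q}$.
   Context: A closed set $C\subset\mathbb{R}^n$ is a $k$-cone if $lv\in C$ for all $v\in C$, $l\in\mathbb{R}$, and the maximal dimension of a linear subspace contained in $C$ is $k$. $C$ is $k$-solid if there is a $k$-dimensional subspace $W$ with $W\setminus\{0\}\subset\operatorname{Int}C$. Write $x\sim y$ if $x-y\in C$ and $x\approx y$ if $x-y\in\operatorname{Int}C$. A flow $\Phi_t$ is strongly monotone with respect to a $k$-solid cone $C$ if $x\sim y$ implies $\Phi_t(x)\sim\Phi_t(y)$ for $t\ge0$, and $x\ne y$, $x\sim y$ imply $\Phi_t(x)\approx\Phi_t(y)$ for $t>0$. Assumption (FWW): the flow $\Phi_t$ on $\mathbb{R}^n$ is $C^{1,\alpha}$-smooth ($C^1$ with locally $\alpha$-Hölder derivative, $\alpha\in(0,1]$), strongly monotone with respect to the $k$-cone $C$, and $D_x\Phi_t(C\setminus\{0\})\subset\operatorname{Int}C$ for $t>0$. A set $\mathcal{D}$ is $\omega$-compact if every forward orbit from $\mathcal{D}$ is bounded and $\bigcup_{x\in\mathcal{D}}\omega(x)$ is bounded. A nontrivial orbit $O(x)=\{\Phi_t(x):t\ge0\}$ is pseudo-ordered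 if it contains two distinct points $\Phi_{t_1}(x)\sim\Phi_{t_2}(x)$; $Q$ is the set of $x$ whose orbit is pseudo-ordered, and $\overline{Q}$ its closure. A $k$-exponential separation along a compact invariant set $K$ associated with $C$ consists of continuous (in the Grassmannian gap metric) families of $k$-dimensional subspaces $E_y$ and $(n-k)$-dimensional subspaces $F_y$, $y\in K$, with $\mathbb{R}^n=E_y\oplus F_y$, $D_y\Phi_tE_y=E_{\Phi_t(y)}$, $D_y\Phi_tF_y\subset F_{\Phi_t(y)}$ ($t>0$), constants $M>0$, $0<\gamma<1$ with $\|D_y\Phi_tw\|\le M\gamma^t\|D_y\Phi_tv\|$ for unit $w\in F_y$, $v\in E_y$, $t\ge0$, and $E_y\subset\operatorname{Int}C\cup\{0\}$, $F_y\cap C=\{0\}$; under (FWW) such a separation exists along every compact invariant set. The $k$-Lyapunov exponent is $\lambda_{kz}=\limsup_{t\to+\infty}t^{-1}\log\inf_{v\in E_z,\|v\|=1}\|D_z\Phi_tv\|$. *)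

theory Defs
  imports "HOL-Analysis.Analysis"
begin

definition k_cone :: "nat \<Rightarrow> 'a::euclidean_space set \<Rightarrow> bool" where
  "k_cone k C \<longleftrightarrow> closed C \<and> (\<forall>v\<in>C. \<forall>l::real. l *\<^sub>R v \<in> C)
     \<and> (\<exists>W. subspace W \<and> W \<subseteq> C \<and> dim W = k)
     \<and> (\<forall>W. subspace W \<and> W \<subseteq> C \<longrightarrow> dim W \<le> k)"

definition k_solid :: "nat \<Rightarrow> 'a::euclidean_space set \<Rightarrow> bool" where
  "k_solid k C \<longleftrightarrow> (\<exists>W. subspace W \<and> dim W = k \<and> W - {0} \<subseteq> interior C)"

definition cone_rel :: "'a::euclidean_space set \<Rightarrow> 'a \<Rightarrow> 'a \<Rightarrow> bool" where
  "cone_rel C x y \<longleftrightarrow> x - y \<in> C"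

definition cone_rel_strict :: "'a::euclidean_space set \<Rightarrow> 'a \<Rightarrow> 'a \<Rightarrow> bool" where
  "cone_rel_strict C x y \<longleftrightarrow> x - y \<in> interior C"

definition is_flow :: "(real \<Rightarrow> 'a::euclidean_space \<Rightarrow> 'a) \<Rightarrow> bool" where
  "is_flow \<Phi> \<longleftrightarrow> continuous_on UNIV (\<lambda>p. \<Phi> (fst p) (snd p))
     \<and> (\<forall>x. \<Phi> 0 x = x) \<and> (\<forall>t s x. \<Phi> (t + s) x = \<Phi> t (\<Phi> s x))"

definition C1_alpha_flow ::
  "real \<Rightarrow> (real \<Rightarrow> 'a::euclidean_space \<Rightarrow> 'a) \<Rightarrow> (real \<Rightarrow> 'a \<Rightarrow> 'a \<Rightarrow>\<^sub>L 'a) \<Rightarrow> bool" where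
  "C1_alpha_flow \<alpha> \<Phi> D \<longleftrightarrow> 0 < \<alpha> \<and> \<alpha> \<le> 1 \<and> is_flow \<Phi>
     \<and> (\<forall>t x. (\<Phi> t has_derivative blinfun_apply (D t x)) (at x))
     \<and> (\<forall>t x. \<exists>r>0. \<exists>L. \<forall>y\<in>ball x r. \<forall>z\<in>ball x r.
            norm (D t y - D t z) \<le> L * dist y z powr \<alpha>)"

definition strongly_monotone ::
  "(real \<Rightarrow> 'a::euclidean_space \<Rightarrow> 'a) \<Rightarrow> 'a set \<Rightarrow> bool" where
  "strongly_monotone \<Phi> C \<longleftrightarrow>
     (\<forall>x y t. cone_rel C x y \<and> t \<ge> 0 \<longrightarrow> cone_rel C (\<Phi> t x) (\<Phi> t y))
   \<and> (\<forall>x y t. x \<noteq> y \<and> cone_rel C x y \<and> t > 0 \<longrightarrow> cone_rel_strict C (\<Phi> t x) (\<Phi> t y))"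

text \<open>Assumption (FWW) for the k-cone C (strong monotonicity is defined for k-solid cones).\<close>
definition FWW ::
  "real \<Rightarrow> (real \<Rightarrow> 'a::euclidean_space \<Rightarrow> 'a) \<Rightarrow> (real \<Rightarrow> 'a \<Rightarrow> 'a \<Rightarrow>\<^sub>L 'a) \<Rightarrow> nat \<Rightarrow> 'a set \<Rightarrow> bool" where
  "FWW \<alpha> \<Phi> D k C \<longleftrightarrow> C1_alpha_flow \<alpha> \<Phi> D \<and> k_cone k C \<and> k_solid k C
     \<and> strongly_monotone \<Phi> C
     \<and> (\<forall>t x v. t > 0 \<and> v \<in> C - {0} \<longrightarrow> D t x v \<in> interior C)"

definition omega_limit :: "(real \<Rightarrow> 'a::euclidean_space \<Rightarrow> 'a) \<Rightarrow> 'a \<Rightarrow> 'a set" where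
  "omega_limit \<Phi> x = {y. \<exists>s::nat \<Rightarrow> real. filterlim s at_top sequentially
                         \<and> (\<lambda>m. \<Phi> (s m) x) \<longlonglongrightarrow> y}"

definition forward_orbit :: "(real \<Rightarrow> 'a \<Rightarrow> 'a) \<Rightarrow> 'a \<Rightarrow> 'a set" where
  "forward_orbit \<Phi> x = (\<lambda>t. \<Phi> t x) ` {0..}"

definition omega_compact :: "(real \<Rightarrow> 'a::euclidean_space \<Rightarrow> 'a) \<Rightarrow> 'a set \<Rightarrow> bool" where
  "omega_compact \<Phi> \<D> \<longleftrightarrow> (\<forall>x\<in>\<D>. bounded (forward_orbit \<Phi> x))
     \<and> bounded (\<Union>x\<in>\<D>. omega_limit \<Phi> x)"

definition pseudo_ordered_set :: "(real \<Rightarrow> 'a::euclidean_space \<Rightarrow> 'a) \<Rightarrow> 'a set \<Rightarrow> 'a set" where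
  "pseudo_ordered_set \<Phi> C = {x. (\<exists>t. \<Phi> t x \<noteq> x) \<and>
      (\<exists>t1 t2. 0 \<le> t1 \<and> 0 \<le> t2 \<and> \<Phi> t1 x \<noteq> \<Phi> t2 x \<and> cone_rel C (\<Phi> t1 x) (\<Phi> t2 x))}"

definition gap_dir :: "'a::euclidean_space set \<Rightarrow> 'a set \<Rightarrow> real" where
  "gap_dir U V = Sup ({0} \<union> {infdist u V | u. u \<in> U \<and> norm u = 1})"

definition gap :: "'a::euclidean_space set \<Rightarrow> 'a set \<Rightarrow> real" where
  "gap U V = max (gap_dir U V) (gap_dir V U)"

definition gap_continuous_on :: "'a::euclidean_space set \<Rightarrow> ('a \<Rightarrow> 'a set) \<Rightarrow> bool" where
  "gap_continuous_on K E \<longleftrightarrow> (\<forall>y\<in>K. \<forall>\<epsilon>>0. \<exists>\<delta>>0. \<forall>y'\<in>K. dist y' y < \<delta> \<longrightarrow> gap (E y') (E y) < \<epsilon>)"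

definition exp_separation ::
  "(real \<Rightarrow> 'a::euclidean_space \<Rightarrow> 'a) \<Rightarrow> (real \<Rightarrow> 'a \<Rightarrow> 'a \<Rightarrow>\<^sub>L 'a) \<Rightarrow> nat \<Rightarrow> 'a set
     \<Rightarrow> 'a set \<Rightarrow> ('a \<Rightarrow> 'a set) \<Rightarrow> ('a \<Rightarrow> 'a set) \<Rightarrow> bool" where
  "exp_separation \<Phi> D k C K E F \<longleftrightarrow>
     gap_continuous_on K E \<and> gap_continuous_on K F
   \<and> (\<forall>y\<in>K. subspace (E y) \<and> dim (E y) = k \<and> subspace (F y) \<and> dim (F y) = DIM('a) - k
        \<and> E y \<inter> F y = {0} \<and> (\<forall>z. \<exists>e\<in>E y. \<exists>f\<in>F y. z = e + f))
   \<and> (\<forall>y\<in>K. \<forall>t>0. blinfun_apply (D t y) ` E y = E (\<Phi> t y)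
        \<and> blinfun_apply (D t y) ` F y \<subseteq> F (\<Phi> t y))
   \<and> (\<exists>M>0. \<exists>\<gamma>. 0 < \<gamma> \<and> \<gamma> < 1 \<and>
        (\<forall>y\<in>K. \<forall>t\<ge>0. \<forall>w\<in>F y. \<forall>v\<in>E y. norm w = 1 \<and> norm v = 1 \<longrightarrow>
            norm (D t y w) \<le> M * \<gamma> powr t * norm (D t y v)))
   \<and> (\<forall>y\<in>K. E y \<subseteq> interior C \<union> {0} \<and> F y \<inter> C = {0})"

definition lyap_k :: "(real \<Rightarrow> 'a::euclidean_space \<Rightarrow> 'a \<Rightarrow>\<^sub>L 'a) \<Rightarrow> ('a \<Rightarrow> 'a set) \<Rightarrow> 'a \<Rightarrow> ereal" where
  "lyap_k D E z = Limsup at_top (\<lambda>t::real.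
      ereal (ln (Inf {norm (D t z v) | v. v \<in> E z \<and> norm v = 1}) / t))"

end

theory Submission
  imports Defs "HOL-Real_Asymp.Real_Asymp"
begin

lemma flow_comp: "is_flow \<Phi> \<Longrightarrow> \<Phi> t (\<Phi> s y) = \<Phi> (t + s) y"
  unfolding is_flow_def by simp

lemma flow_inj: assumes "is_flow \<Phi>" "\<Phi> t a = \<Phi> t b" shows "a = b"
proof -
  have "\<Phi> (-t) (\<Phi> t a) = a" "\<Phi> (-t) (\<Phi> t b) = b"
    using assms(1) unfolding is_flow_def by (metis add.left_inverse)+
  then show ?thesis using assms(2) by metis
qed

lemma flow_cont_x: assumes "is_flow \<Phi>" shows "continuous_on UNIV (\<Phi> t)"
proof -
  have c: "continuous_on UNIV (\<lambda>p. \<Phi> (fst p) (snd p))" using assms unfolding is_flow_def by simp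
  have "continuous_on UNIV ((\<lambda>p. \<Phi> (fst p) (snd p)) \<circ> (\<lambda>y. (t, y)))"
    by (rule continuous_on_compose) (auto intro!: continuous_intros continuous_on_subset[OF c])
  then show ?thesis by (simp add: o_def)
qed

lemma flow_cont_t: assumes "is_flow \<Phi>" shows "continuous_on UNIV (\<lambda>t. \<Phi> t y)"
proof -
  have c: "continuous_on UNIV (\<lambda>p. \<Phi> (fst p) (snd p))" using assms unfolding is_flow_def by simp
  have "continuous_on UNIV ((\<lambda>p. \<Phi> (fst p) (snd p)) \<circ> (\<lambda>t. (t, y)))"
    by (rule continuous_on_compose) (auto intro!: continuous_intros continuous_on_subset[OF c])
  then show ?thesis by (simp add: o_def)
qed

lemma L1:
  fixes \<Phi> :: "real \<Rightarrow> 'a::euclidean_space \<Rightarrow> 'a"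
  assumes es: "exp_separation \<Phi> D k C K E F" and z: "z \<in> K"
    and ly: "lyap_k D E z > 0" and u: "u \<in> C" "u \<noteq> 0"
  shows "\<exists>t>0. norm (D t z u) > A"
proof -
  from es z obtain e f where ef: "e \<in> E z" "f \<in> F z" "u = e + f"
    unfolding exp_separation_def by metis
  have sE: "subspace (E z)" and sF: "subspace (F z)" and FC: "F z \<inter> C = {0}"
    using es z unfolding exp_separation_def by auto
  obtain M \<gamma> where M: "M > 0" "0 < \<gamma>" "\<gamma> < 1" and dom:
    "\<And>t w v. t \<ge> 0 \<Longrightarrow> w \<in> F z \<Longrightarrow> v \<in> E z \<Longrightarrow> norm w = 1 \<Longrightarrow> norm v = 1 \<Longrightarrow>
        norm (D t z w) \<le> M * \<gamma> powr t * norm (D t z v)"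
    using es z unfolding exp_separation_def by metis
  have e0: "e \<noteq> 0"
  proof
    assume "e = 0" then have "u \<in> F z \<inter> C" using ef u by simp
    then show False using FC u by auto
  qed
  define m where "m t = Inf {norm (D t z v) | v. v \<in> E z \<and> norm v = 1}" for t
  define e1 where "e1 = e /\<^sub>R norm e"
  have e1: "e1 \<in> E z" "norm e1 = 1" using e0 ef sE by (auto simp: e1_def subspace_scale)
  have bdd: "bdd_below {norm (D t z v) | v. v \<in> E z \<and> norm v = 1}" for t
    by (rule bdd_belowI[of _ 0]) auto
  have m_le: "m t * norm e \<le> norm (D t z e)" for t
  proof -
    have "m t \<le> norm (D t z e1)" unfolding m_def by (rule cInf_lower[OF _ bdd]) (use e1 in auto)
    also have "norm (D t z e1) = norm (D t z e) / norm e"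
      by (simp add: e1_def blinfun.scaleR_right divide_inverse_commute)
    finally show ?thesis using e0 by (simp add: field_simps)
  qed
  have m_ge0: "m t \<ge> 0" for t
    unfolding m_def by (rule cInf_greatest) (use e1 in auto)
  have fbound: "norm (D t z f) \<le> M * \<gamma> powr t * norm f / norm e * norm (D t z e)" if "t \<ge> 0" for t
  proof (cases "f = 0")
    case True then show ?thesis by simp
  next
    case False
    have "norm (D t z (f /\<^sub>R norm f)) \<le> M * \<gamma> powr t * norm (D t z e1)"
      by (rule dom[OF that]) (use False ef sF e1 in \<open>auto simp: subspace_scale\<close>)
    then show ?thesis using False e0
      by (simp add: e1_def blinfun.scaleR_right field_simps)
  qed
  have main: "norm (D t z u) \<ge> m t * norm e / 2" if "t \<ge> 0" "M * \<gamma> powr t * norm f / norm e \<le> 1/2" for t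
  proof -
    have "norm (D t z u) \<ge> norm (D t z e) - norm (D t z f)"
      using ef(3) by (simp add: blinfun.add_right norm_diff_ineq)
    moreover have "norm (D t z f) \<le> norm (D t z e) / 2"
      using fbound[OF that(1)] that(2) mult_right_mono[OF that(2) norm_ge_zero[of "D t z e"]] by linarith
    ultimately show ?thesis using m_le[of t] by linarith
  qed
  obtain c where c: "0 < ereal c" "ereal c < lyap_k D E z" using ly ereal_dense2 by blast
  have "\<not> (ereal c \<ge> lyap_k D E z)" using c by simp
  then obtain y where y: "y > ereal c" "\<not> eventually (\<lambda>t. y > ereal (ln (m t) / t)) at_top"
    unfolding lyap_k_def Limsup_le_iff m_def by blast
  have fr: "frequently (\<lambda>t. ln (m t) / t > c) at_top"
  proof -
    have "\<not> eventually (\<lambda>t. \<not> ln (m t) / t > c) at_top"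
    proof
      assume "eventually (\<lambda>t. \<not> ln (m t) / t > c) at_top"
      then have "eventually (\<lambda>t. y > ereal (ln (m t) / t)) at_top"
        by (rule eventually_mono) (use y(1) in \<open>auto simp: not_less intro: le_less_trans[of _ "ereal c"]\<close>)
      then show False using y(2) by simp
    qed
    then show ?thesis unfolding frequently_def .
  qed
  have ev1: "eventually (\<lambda>t. M * \<gamma> powr t * norm f / norm e \<le> 1/2) at_top"
  proof -
    have "((\<lambda>t. M * \<gamma> powr t * norm f / norm e) \<longlongrightarrow> M * 0 * norm f / norm e) at_top"
      by (intro tendsto_intros) (use M e0 in \<open>real_asymp, simp\<close>)
    then show ?thesis by (rule order_tendstoD(2)[of _ _ _ "1/2", THEN eventually_mono]) auto
  qed
  have ev2: "eventually (\<lambda>t. exp (c * t) > 2 * \<bar>A\<bar> / norm e) at_top"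
  proof -
    have "filterlim (\<lambda>t. exp (c * t)) at_top at_top" using c by real_asymp
    then show ?thesis by (simp add: filterlim_at_top_dense)
  qed
  have "frequently (\<lambda>t. ln (m t) / t > c \<and> t \<ge> 1 \<and> M * \<gamma> powr t * norm f / norm e \<le> 1/2
      \<and> exp (c * t) > 2 * \<bar>A\<bar> / norm e) at_top"
  proof (rule frequently_rev_mp[OF fr])
    show "eventually (\<lambda>t. ln (m t) / t > c \<longrightarrow> ln (m t) / t > c \<and> t \<ge> 1 \<and> M * \<gamma> powr t * norm f / norm e \<le> 1/2
      \<and> exp (c * t) > 2 * \<bar>A\<bar> / norm e) at_top"
      using ev1 ev2 eventually_ge_at_top[of 1] by eventually_elim auto
  qed
  then obtain t where t: "ln (m t) / t > c" "t \<ge> 1" "M * \<gamma> powr t * norm f / norm e \<le> 1/2"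
      "exp (c * t) > 2 * \<bar>A\<bar> / norm e"
    using frequently_ex by blast
  have lnm: "ln (m t) > c * t" using t by (simp add: field_simps)
  have "c * t > 0" using c t by simp
  then have mpos: "m t > 0" using lnm m_ge0[of t] by (cases "m t = 0") auto
  then have "m t > exp (c * t)" using lnm by (metis exp_less_mono exp_ln)
  then have "norm e * exp (c * t) < norm e * m t" using e0 by simp
  moreover have "2 * \<bar>A\<bar> < norm e * exp (c * t)" using t(4) e0 by (simp add: field_simps)
  ultimately have "m t * norm e / 2 > \<bar>A\<bar>" by (simp add: field_simps)
  then show ?thesis using main[of t] t by (intro exI[of _ t]) auto
qed

lemma L2:
  fixes \<Phi> :: "real \<Rightarrow> 'a::euclidean_space \<Rightarrow> 'a"
  assumes fww: "FWW \<alpha> \<Phi> D k C" and es: "exp_separation \<Phi> D k C (omega_limit \<Phi> x) E F"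
    and ly: "\<forall>z\<in>omega_limit \<Phi> x. lyap_k D E z > 0" and bd: "bounded (forward_orbit \<Phi> x)"
  shows "\<exists>S \<rho>. \<rho> > 0 \<and> (\<forall>s\<ge>S. \<forall>u\<in>C. 0 < norm u \<and> norm u < \<rho> \<longrightarrow>
            (\<exists>t>0. 3/2 * norm u \<le> norm (\<Phi> t (\<Phi> s x + u) - \<Phi> t (\<Phi> s x))))"
proof (rule ccontr)
  have c1: "C1_alpha_flow \<alpha> \<Phi> D" and kc: "k_cone k C" using fww unfolding FWW_def by auto
  have al: "0 < \<alpha>" and fl: "is_flow \<Phi>" and der: "\<And>t x. (\<Phi> t has_derivative blinfun_apply (D t x)) (at x)"
    and hol: "\<And>t x. \<exists>r>0. \<exists>L. \<forall>y\<in>ball x r. \<forall>z\<in>ball x r. norm (D t y - D t z) \<le> L * dist y z powr \<alpha>"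
    using c1 unfolding C1_alpha_flow_def by auto
  have clC: "closed C" and scC: "\<And>v l. v \<in> C \<Longrightarrow> l *\<^sub>R v \<in> C" using kc unfolding k_cone_def by auto
  assume neg: "\<not> ?thesis"
  have "\<exists>s u. s \<ge> real m \<and> u \<in> C \<and> 0 < norm u \<and> norm u < 1 / (real m + 1) \<and>
      (\<forall>t>0. norm (\<Phi> t (\<Phi> s x + u) - \<Phi> t (\<Phi> s x)) < 3/2 * norm u)" for m :: nat
  proof -
    have p: "1 / (real m + 1) > 0" by simp
    have "\<not> (\<forall>s\<ge>real m. \<forall>u\<in>C. 0 < norm u \<and> norm u < 1 / (real m + 1) \<longrightarrow>
            (\<exists>t>0. 3/2 * norm u \<le> norm (\<Phi> t (\<Phi> s x + u) - \<Phi> t (\<Phi> s x))))"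
      using neg p by blast
    then show ?thesis by (auto simp: not_le)
  qed
  then obtain sq uq where H: "\<And>m. sq m \<ge> real m \<and> uq m \<in> C \<and> 0 < norm (uq m) \<and> norm (uq m) < 1 / (real m + 1) \<and>
      (\<forall>t>0. norm (\<Phi> t (\<Phi> (sq m) x + uq m) - \<Phi> t (\<Phi> (sq m) x)) < 3/2 * norm (uq m))"
    by metis
  define g where "g m = (\<Phi> (sq m) x, uq m /\<^sub>R norm (uq m))" for m
  obtain B where B: "\<And>y. y \<in> forward_orbit \<Phi> x \<Longrightarrow> norm y \<le> B" using bd bounded_iff by metis
  have orb: "\<Phi> (sq m) x \<in> forward_orbit \<Phi> x" for m
    unfolding forward_orbit_def using H[of m] by (intro image_eqI[of _ _ "sq m"]) auto
  have "range g \<subseteq> cball 0 B \<times> cball 0 1"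
    using B orb H by (auto simp: g_def)
  then have "bounded (range g)" using bounded_subset[OF bounded_Times[OF bounded_cball bounded_cball]] by blast
  then obtain l r where r: "strict_mono r" "(g \<circ> r) \<longlonglongrightarrow> l" using bounded_imp_convergent_subsequence by blast
  obtain z uh where l: "l = (z, uh)" by (cases l)
  have az: "(\<lambda>m. \<Phi> (sq (r m)) x) \<longlonglongrightarrow> z" using tendsto_fst[OF r(2)] by (simp add: l g_def o_def)
  have uz: "(\<lambda>m. uq (r m) /\<^sub>R norm (uq (r m))) \<longlonglongrightarrow> uh" using tendsto_snd[OF r(2)] by (simp add: l g_def o_def)
  have zom: "z \<in> omega_limit \<Phi> x"
    unfolding omega_limit_def
  proof (intro CollectI exI conjI)
    show "filterlim (\<lambda>m. sq (r m)) at_top sequentially"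
    proof (rule filterlim_at_top_mono[OF filterlim_real_sequentially])
      show "eventually (\<lambda>m. real m \<le> sq (r m)) sequentially"
        using H seq_suble[OF r(1)] by (intro always_eventually allI) (meson of_nat_le_iff order_trans)
    qed
  qed (fact az)
  have uhC: "uh \<in> C" by (rule closed_sequentially[OF clC _ uz]) (use H scC in auto)
  have "(\<lambda>m. norm (uq (r m) /\<^sub>R norm (uq (r m)))) \<longlonglongrightarrow> norm uh" by (rule tendsto_norm[OF uz])
  moreover have "(\<lambda>m. norm (uq (r m) /\<^sub>R norm (uq (r m)))) = (\<lambda>m. 1)" using H by (auto simp: fun_eq_iff)
  ultimately have "norm uh = 1" using LIMSEQ_unique tendsto_const by metis
  then have uh0: "uh \<noteq> 0" by auto
  obtain t where t: "t > 0" "norm (D t z uh) > 3" using L1[OF es zom ly[rule_format, OF zom] uhC uh0] by blast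
  obtain r0 L where r0: "r0 > 0" and L: "\<And>y y'. y \<in> ball z r0 \<Longrightarrow> y' \<in> ball z r0 \<Longrightarrow> norm (D t y - D t y') \<le> L * dist y y' powr \<alpha>"
    using hol[where t=t and x=z] by metis
  define d where "d m = dist (\<Phi> (sq (r m)) x) z + norm (uq (r m))" for m
  have u0: "(\<lambda>m. uq (r m)) \<longlonglongrightarrow> 0"
  proof (rule tendsto_norm_zero_cancel, rule Lim_null_comparison[OF _ lim_1_over_n])
    show "eventually (\<lambda>m. norm (norm (uq (r m))) \<le> 1 / real m) sequentially"
    proof (rule eventually_sequentiallyI[of 1])
      fix m :: nat assume "1 \<le> m"
      have "norm (uq (r m)) < 1 / (real (r m) + 1)" using H by blast
      also have "\<dots> \<le> 1 / real m" using seq_suble[OF r(1), of m] \<open>1 \<le> m\<close> by (simp add: frac_le)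
      finally show "norm (norm (uq (r m))) \<le> 1 / real m" by simp
    qed
  qed
  have d0: "d \<longlonglongrightarrow> 0" unfolding d_def
    using tendsto_add[OF tendsto_dist[OF az tendsto_const[of z]] tendsto_norm[OF u0]] by simp
  have dp: "(\<lambda>m. \<bar>L\<bar> * d m powr \<alpha>) \<longlonglongrightarrow> 0"
    using tendsto_mult[OF tendsto_const tendsto_zero_powrI[OF d0 tendsto_const _ al]]
    by (simp add: d_def)
  have Dc: "(\<lambda>m. norm (D t z (uq (r m) /\<^sub>R norm (uq (r m))))) \<longlonglongrightarrow> norm (D t z uh)"
    by (intro tendsto_norm blinfun.tendsto[OF tendsto_const uz])
  have "eventually (\<lambda>m. d m < r0 \<and> \<bar>L\<bar> * d m powr \<alpha> < 1 \<and> norm (D t z (uq (r m) /\<^sub>R norm (uq (r m)))) > 3) sequentially"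
    using order_tendstoD(2)[OF d0 r0] order_tendstoD(2)[OF dp zero_less_one] order_tendstoD(1)[OF Dc t(2)]
    by eventually_elim auto
  then obtain N where N: "\<And>m. m \<ge> N \<Longrightarrow> d m < r0 \<and> \<bar>L\<bar> * d m powr \<alpha> < 1 \<and> norm (D t z (uq (r m) /\<^sub>R norm (uq (r m)))) > 3"
    unfolding eventually_sequentially by blast
  define m where "m = N"
  have m: "d m < r0" "\<bar>L\<bar> * d m powr \<alpha> < 1" "norm (D t z (uq (r m) /\<^sub>R norm (uq (r m)))) > 3"
    using N[of N] by (auto simp: m_def)
  define a where "a = \<Phi> (sq (r m)) x"
  define u where "u = uq (r m)"
  have un: "0 < norm u" "norm (\<Phi> t (a + u) - \<Phi> t a) < 3/2 * norm u" using H[of "r m"] t(1) unfolding a_def u_def by blast+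
  have lin: "norm (\<Phi> t (a + u) - \<Phi> t a - D t z ((a + u) - a)) \<le> norm ((a + u) - a) * (\<bar>L\<bar> * d m powr \<alpha>)"
  proof (rule differentiable_bound_linearization[where S = "cball z (d m)" and f' = "\<lambda>y. blinfun_apply (D t y)"])
    show "a + s *\<^sub>R ((a + u) - a) \<in> cball z (d m)" if "s \<in> {0..1}" for s
    proof -
      have "dist z (a + s *\<^sub>R u) \<le> dist z a + norm (s *\<^sub>R u)"
        by (metis dist_norm dist_triangle2 norm_minus_commute add_diff_cancel_left' dist_commute)
      also have "norm (s *\<^sub>R u) \<le> norm u" using that by (auto simp: mult_left_le_one_le)
      finally show ?thesis by (simp add: d_def a_def u_def dist_commute)
    qed
    show "(\<Phi> t has_derivative blinfun_apply (D t y)) (at y within cball z (d m))" for y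
      using der has_derivative_at_withinI by blast
    show "onorm (blinfun_apply (D t y) - blinfun_apply (D t z)) \<le> \<bar>L\<bar> * d m powr \<alpha>" if "y \<in> cball z (d m)" for y
    proof -
      have yb: "y \<in> ball z r0" using that m(1) by (auto simp: dist_commute)
      have "onorm (blinfun_apply (D t y) - blinfun_apply (D t z)) = norm (D t y - D t z)"
        by (simp add: norm_blinfun.rep_eq minus_blinfun.rep_eq fun_diff_def)
      also have "\<dots> \<le> L * dist y z powr \<alpha>" using L[OF yb] r0 by simp
      also have "\<dots> \<le> \<bar>L\<bar> * dist y z powr \<alpha>" by (simp add: mult_right_mono)
      also have "\<dots> \<le> \<bar>L\<bar> * d m powr \<alpha>"
        using that al by (intro mult_left_mono powr_mono2) (auto simp: dist_commute)
      finally show ?thesis .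
    qed
    show "z \<in> cball z (d m)" using m(1) by (simp add: d_def)
  qed
  have "norm (D t z u) \<le> norm (\<Phi> t (a + u) - \<Phi> t a) + norm u * (\<bar>L\<bar> * d m powr \<alpha>)"
    using lin norm_triangle_ineq4[of "\<Phi> t (a + u) - \<Phi> t a" "D t z u"] by (simp add: norm_minus_commute)
    (smt (verit, ccfv_threshold) norm_minus_commute norm_triangle_ineq2)
  also have "\<dots> < 3/2 * norm u + norm u * 1" using un m(2) by (intro add_less_le_mono mult_left_mono) auto
  finally have "norm (D t z u) < 5/2 * norm u" by simp
  moreover have "norm (D t z u) = norm u * norm (D t z (u /\<^sub>R norm u))"
    using un by (simp add: blinfun.scaleR_right)
  moreover have "norm u * norm (D t z (u /\<^sub>R norm u)) > norm u * 3" using m(3) un by (simp add: u_def)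
  ultimately show False using un by linarith
qed

lemma L3:
  fixes \<Phi> :: "real \<Rightarrow> 'a::euclidean_space \<Rightarrow> 'a"
  assumes fl: "is_flow \<Phi>"
    and mono: "\<forall>x y t. cone_rel C x y \<and> t \<ge> 0 \<longrightarrow> cone_rel C (\<Phi> t x) (\<Phi> t y)"
    and rho: "\<rho> > 0"
    and S: "\<forall>s\<ge>S. \<forall>u\<in>C. 0 < norm u \<and> norm u < \<rho> \<longrightarrow>
            (\<exists>t>0. 3/2 * norm u \<le> norm (\<Phi> t (\<Phi> s x + u) - \<Phi> t (\<Phi> s x)))"
    and y: "y - x \<in> C" "y \<noteq> x"
  shows "\<exists>t\<ge>0. \<rho> \<le> norm (\<Phi> t y - \<Phi> t x)"
proof (rule ccontr)
  assume "\<not> ?thesis"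
  then have neg: "\<And>t. t \<ge> 0 \<Longrightarrow> norm (\<Phi> t y - \<Phi> t x) < \<rho>" by (meson not_le)
  define w where "w s = \<Phi> s y - \<Phi> s x" for s
  define S' where "S' = max S 0"
  have wC: "w s \<in> C" if "s \<ge> 0" for s
    using mono y(1) that unfolding cone_rel_def w_def by blast
  have w0: "w s \<noteq> 0" for s
    using flow_inj[OF fl, of s y x] y(2) unfolding w_def by auto
  have "\<forall>s. \<exists>t. s \<ge> S' \<longrightarrow> t > 0 \<and> 3/2 * norm (w s) \<le> norm (w (t + s))"
  proof
    fix s
    show "\<exists>t. s \<ge> S' \<longrightarrow> t > 0 \<and> 3/2 * norm (w s) \<le> norm (w (t + s))"
    proof (cases "s \<ge> S'")
      case True
      then have s0: "s \<ge> 0" "s \<ge> S" by (auto simp: S'_def)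
      have "\<Phi> s x + w s = \<Phi> s y" by (simp add: w_def)
      moreover have "0 < norm (w s)" "norm (w s) < \<rho>" using w0 neg[OF s0(1)] by (auto simp: w_def)
      ultimately obtain t where "t > 0" "3/2 * norm (w s) \<le> norm (\<Phi> t (\<Phi> s y) - \<Phi> t (\<Phi> s x))"
        using S s0 wC[OF s0(1)] by metis
      then show ?thesis by (intro exI[of _ t]) (simp add: w_def flow_comp[OF fl])
    qed auto
  qed
  then obtain \<tau> where tau: "\<And>s. s \<ge> S' \<Longrightarrow> \<tau> s > 0 \<and> 3/2 * norm (w s) \<le> norm (w (\<tau> s + s))"
    by metis
  define \<sigma> where "\<sigma> = rec_nat S' (\<lambda>_ s. \<tau> s + s)"
  have s0: "\<sigma> 0 = S'" and sS: "\<sigma> (Suc j) = \<tau> (\<sigma> j) + \<sigma> j" for j by (simp_all add: \<sigma>_def)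
  have ind: "\<sigma> j \<ge> S' \<and> norm (w (\<sigma> j)) \<ge> (3/2)^j * norm (w S')" for j
  proof (induction j)
    case 0 then show ?case by (simp add: s0)
  next
    case (Suc j)
    have "\<tau> (\<sigma> j) > 0" "3/2 * norm (w (\<sigma> j)) \<le> norm (w (\<sigma> (Suc j)))" using tau[of "\<sigma> j"] Suc by (auto simp: sS)
    moreover have "(3/2)^Suc j * norm (w S') \<le> 3/2 * norm (w (\<sigma> j))" using Suc by (simp add: mult.commute)
    ultimately show ?case using Suc by (auto simp: sS)
  qed
  have wS: "norm (w S') > 0" using w0 by simp
  obtain n where n: "\<rho> / norm (w S') < (3/2::real)^n" using real_arch_pow[of "3/2"] by auto
  then have 1: "\<rho> < (3/2)^n * norm (w S')" using wS by (simp add: field_simps)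
  have 2: "(3/2)^n * norm (w S') \<le> norm (w (\<sigma> n))" using ind by blast
  have 3: "norm (w (\<sigma> n)) < \<rho>" using neg[of "\<sigma> n"] ind[of n] by (auto simp: w_def S'_def)
  from 1 2 3 show False by linarith
qed

theorem theorem4p5:
  fixes \<Phi> :: "real \<Rightarrow> 'a::euclidean_space \<Rightarrow> 'a"
    and D :: "real \<Rightarrow> 'a \<Rightarrow> 'a \<Rightarrow>\<^sub>L 'a"
    and C :: "'a set" and k :: nat and \<alpha> :: real
    and \<D> :: "'a set" and x :: 'a
    and E F :: "'a \<Rightarrow> 'a set"
  assumes "1 \<le> k"
    and "FWW \<alpha> \<Phi> D k C"
    and "open \<D>" and "omega_compact \<Phi> \<D>" and "x \<in> \<D>"
    and "exp_separation \<Phi> D k C (omega_limit \<Phi> x) E F"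
    and "\<forall>z\<in>omega_limit \<Phi> x. lyap_k D E z > 0"
  shows "x \<in> closure (pseudo_ordered_set \<Phi> C)"
proof -
  note fww = assms(2)
  have c1: "C1_alpha_flow \<alpha> \<Phi> D" and kc: "k_cone k C" and sm: "strongly_monotone \<Phi> C"
    using fww unfolding FWW_def by auto
  have fl: "is_flow \<Phi>" using c1 unfolding C1_alpha_flow_def by auto
  have clC: "closed C" and scC: "\<And>v l. v \<in> C \<Longrightarrow> l *\<^sub>R v \<in> C" using kc unfolding k_cone_def by auto
  have mono: "\<forall>x y t. cone_rel C x y \<and> t \<ge> 0 \<longrightarrow> cone_rel C (\<Phi> t x) (\<Phi> t y)"
    and smono: "\<And>x y t. x \<noteq> y \<Longrightarrow> cone_rel C x y \<Longrightarrow> t > 0 \<Longrightarrow> cone_rel_strict C (\<Phi> t x) (\<Phi> t y)"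
    using sm unfolding strongly_monotone_def by auto
  have bd: "bounded (forward_orbit \<Phi> x)" using assms(4,5) unfolding omega_compact_def by auto
  obtain S \<rho> where rho: "\<rho> > 0" and S: "\<forall>s\<ge>S. \<forall>u\<in>C. 0 < norm u \<and> norm u < \<rho> \<longrightarrow>
            (\<exists>t>0. 3/2 * norm u \<le> norm (\<Phi> t (\<Phi> s x + u) - \<Phi> t (\<Phi> s x)))"
    using L2[OF fww assms(6,7) bd] by blast
  obtain W where W: "subspace W" "W \<subseteq> C" "dim W = k" using kc unfolding k_cone_def by blast
  have "\<not> W \<subseteq> {0}" using W(3) assms(1) dim_eq_0[of W] by linarith
  then obtain v where v: "v \<in> W" "v \<noteq> 0" by blast
  have vC: "v \<in> C" using v W by auto
  define y where "y m = x + (\<rho> / (norm v * (real m + 2))) *\<^sub>R v" for m :: nat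
  have yx: "y m - x \<in> C" for m using scC[OF vC] by (simp add: y_def)
  have ydist: "norm (y m - x) = \<rho> / (real m + 2)" for m using v rho by (simp add: y_def)
  have yne: "y m \<noteq> x" for m using ydist[of m] rho by auto
  have ylim: "y \<longlonglongrightarrow> x"
  proof -
    have "(\<lambda>m. (\<rho> / (norm v * (real m + 2))) *\<^sub>R v) \<longlonglongrightarrow> 0 *\<^sub>R v"
    proof (intro tendsto_intros)
      have h1: "(\<lambda>m::nat. 1 / (real m + 2)) \<longlonglongrightarrow> 0" by real_asymp
      have "(\<lambda>m::nat. (\<rho> / norm v) * (1 / (real m + 2))) \<longlonglongrightarrow> (\<rho> / norm v) * 0"
        by (intro tendsto_mult tendsto_const h1)
      then show "(\<lambda>m. \<rho> / (norm v * (real m + 2))) \<longlonglongrightarrow> 0" by simp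
    qed
    then show ?thesis unfolding y_def using tendsto_add[OF tendsto_const[of x]] by fastforce
  qed
  have cont: "continuous_on UNIV (\<Phi> t)" for t using flow_cont_x[OF fl] .
  have "\<exists>t\<ge>0. norm (\<Phi> t (y m) - \<Phi> t x) = \<rho>" for m
  proof -
    obtain t1 where t1: "t1 \<ge> 0" "\<rho> \<le> norm (\<Phi> t1 (y m) - \<Phi> t1 x)"
      using L3[OF fl mono rho S yx yne] by blast
    have "\<rho> / (real m + 2) \<le> \<rho> / 1" by (rule divide_left_mono) (use rho in auto)
    then have "norm (\<Phi> 0 (y m) - \<Phi> 0 x) \<le> \<rho>"
      using fl ydist[of m] unfolding is_flow_def by simp
    moreover have "continuous_on {0..t1} (\<lambda>t. norm (\<Phi> t (y m) - \<Phi> t x))"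
      by (intro continuous_intros continuous_on_subset[OF flow_cont_t[OF fl]]) auto
    ultimately show ?thesis using IVT'[of "\<lambda>t. norm (\<Phi> t (y m) - \<Phi> t x)" 0 \<rho> t1] t1 by auto
  qed
  then obtain tm where tm: "\<And>m. tm m \<ge> 0 \<and> norm (\<Phi> (tm m) (y m) - \<Phi> (tm m) x) = \<rho>" by metis
  define g where "g m = (\<Phi> (tm m) x, \<Phi> (tm m) (y m))" for m
  obtain B where B: "\<And>p. p \<in> forward_orbit \<Phi> x \<Longrightarrow> norm p \<le> B" using bd bounded_iff by metis
  have orb: "\<Phi> t x \<in> forward_orbit \<Phi> x" if "t \<ge> 0" for t
    unfolding forward_orbit_def using that by auto
  have "range g \<subseteq> cball 0 B \<times> cball 0 (B + \<rho>)"
  proof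
    fix p assume "p \<in> range g"
    then obtain m where ab: "p = g m" by auto
    have na: "norm (\<Phi> (tm m) x) \<le> B" using B orb tm by blast
    moreover have "norm (\<Phi> (tm m) (y m)) \<le> norm (\<Phi> (tm m) x) + \<rho>"
      using tm[of m] norm_triangle_ineq2[of "\<Phi> (tm m) (y m)" "\<Phi> (tm m) x"] by simp
    ultimately show "p \<in> cball 0 B \<times> cball 0 (B + \<rho>)" using ab by (auto simp: g_def)
  qed
  then have "bounded (range g)" using bounded_subset[OF bounded_Times[OF bounded_cball bounded_cball]] by blast
  then obtain l r where r: "strict_mono r" "(g \<circ> r) \<longlonglongrightarrow> l" using bounded_imp_convergent_subsequence by blast
  obtain z w where l: "l = (z, w)" by (cases l)
  have az: "(\<lambda>m. \<Phi> (tm (r m)) x) \<longlonglongrightarrow> z" using tendsto_fst[OF r(2)] by (simp add: l g_def o_def)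
  have bw: "(\<lambda>m. \<Phi> (tm (r m)) (y (r m))) \<longlonglongrightarrow> w" using tendsto_snd[OF r(2)] by (simp add: l g_def o_def)
  have inC: "\<forall>m. \<Phi> (tm (r m)) (y (r m)) - \<Phi> (tm (r m)) x \<in> C"
      using mono yx tm unfolding cone_rel_def by blast
  have wzC: "w - z \<in> C"
    by (rule closed_sequentially[OF clC _ tendsto_diff[OF bw az]]) (use inC in simp)
  have "(\<lambda>m. norm (\<Phi> (tm (r m)) (y (r m)) - \<Phi> (tm (r m)) x)) \<longlonglongrightarrow> norm (w - z)"
    by (intro tendsto_norm tendsto_diff bw az)
  moreover have "(\<lambda>m. norm (\<Phi> (tm (r m)) (y (r m)) - \<Phi> (tm (r m)) x)) = (\<lambda>m. \<rho>)" using tm by auto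
  ultimately have wz: "norm (w - z) = \<rho>" using LIMSEQ_unique tendsto_const by metis
  then have "w \<noteq> z" using rho by auto
  then have "\<Phi> 1 w - \<Phi> 1 z \<in> interior C" using smono[of w z 1] wzC unfolding cone_rel_def cone_rel_strict_def by auto
  then obtain e where e: "e > 0" "ball (\<Phi> 1 w - \<Phi> 1 z) e \<subseteq> interior C"
    using open_interior open_contains_ball by blast
  have c1w: "continuous (at w) (\<Phi> 1)" and c1z: "continuous (at z) (\<Phi> 1)"
    using cont[of 1] continuous_on_eq_continuous_at by blast+
  obtain d1 where d1: "d1 > 0" "\<And>a. dist a w < d1 \<Longrightarrow> dist (\<Phi> 1 a) (\<Phi> 1 w) < e/2"
    using c1w e unfolding continuous_at_eps_delta by (metis half_gt_zero)
  obtain d2 where d2: "d2 > 0" "\<And>a. dist a z < d2 \<Longrightarrow> dist (\<Phi> 1 a) (\<Phi> 1 z) < e/2"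
    using c1z e unfolding continuous_at_eps_delta by (metis half_gt_zero)
  define \<delta> where "\<delta> = min (min d1 d2) (\<rho>/2)"
  have dl: "\<delta> > 0" "\<delta> \<le> d1" "\<delta> \<le> d2" "\<delta> \<le> \<rho>/2" using d1 d2 rho by (auto simp: \<delta>_def)
  obtain m0 where m0: "dist (\<Phi> (tm (r m0)) x) z < \<delta>/2"
    using az dl(1) unfolding LIMSEQ_def by (metis half_gt_zero order_refl)
  define \<sigma> where "\<sigma> = tm (r m0)"
  have sg: "\<sigma> \<ge> 0" using tm by (simp add: \<sigma>_def)
  have ys: "(\<lambda>m. \<Phi> \<sigma> (y (r m))) \<longlonglongrightarrow> \<Phi> \<sigma> x"
    using continuous_on_tendsto_compose[OF cont[of \<sigma>] LIMSEQ_subseq_LIMSEQ[OF ylim r(1)]] by (simp add: o_def)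
  show ?thesis unfolding closure_approachable
  proof (intro allI impI)
    fix \<epsilon> :: real assume eps: "\<epsilon> > 0"
    have "eventually (\<lambda>m. dist (\<Phi> \<sigma> (y (r m))) (\<Phi> \<sigma> x) < \<delta>/2 \<and> dist (\<Phi> (tm (r m)) (y (r m))) w < \<delta>
          \<and> dist (y (r m)) x < \<epsilon>) sequentially"
    proof -
      have e1: "eventually (\<lambda>m. dist (\<Phi> \<sigma> (y (r m))) (\<Phi> \<sigma> x) < \<delta>/2) sequentially"
        using tendstoD[OF ys, of "\<delta>/2"] dl(1) by simp
      have e2: "eventually (\<lambda>m. dist (\<Phi> (tm (r m)) (y (r m))) w < \<delta>) sequentially"
        using tendstoD[OF bw dl(1)] by simp
      have e3: "eventually (\<lambda>m. dist (y (r m)) x < \<epsilon>) sequentially"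
        using tendstoD[OF LIMSEQ_subseq_LIMSEQ[OF ylim r(1)] eps] by (simp add: o_def)
      show ?thesis using e1 e2 e3 by eventually_elim auto
    qed
    then obtain N where N: "\<And>m. m \<ge> N \<Longrightarrow> dist (\<Phi> \<sigma> (y (r m))) (\<Phi> \<sigma> x) < \<delta>/2 \<and> dist (\<Phi> (tm (r m)) (y (r m))) w < \<delta>
          \<and> dist (y (r m)) x < \<epsilon>"
      unfolding eventually_sequentially by blast
    define q where "q = y (r N)"
    define a where "a = \<Phi> \<sigma> q"
    define b where "b = \<Phi> (tm (r N)) q"
    have qa: "dist a z < \<delta>" using N[of N] m0 dist_triangle_half_l[of a "\<Phi> \<sigma> x" \<delta> z]
      by (auto simp: a_def q_def \<sigma>_def dist_commute)
    have qb: "dist b w < \<delta>" using N[of N] by (auto simp: b_def q_def)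
    have qx: "dist q x < \<epsilon>" using N[of N] by (auto simp: q_def)
    have "a \<noteq> b"
    proof
      assume "a = b"
      have "dist w z \<le> dist w b + dist b z" by (rule dist_triangle)
      moreover have "dist w b = dist b w" by (rule dist_commute)
      ultimately have "dist w z < 2 * \<delta>" using qa qb \<open>a = b\<close> by simp
      then show False using wz dl(4) by (simp add: dist_norm)
    qed
    then have ab1: "\<Phi> 1 b \<noteq> \<Phi> 1 a" using flow_inj[OF fl, of 1 b a] by auto
    have h1: "dist (\<Phi> 1 b) (\<Phi> 1 w) < e/2" using d1(2) qb dl by auto
    have h2: "dist (\<Phi> 1 a) (\<Phi> 1 z) < e/2" using d2(2) qa dl by auto
    have "dist (\<Phi> 1 b - \<Phi> 1 a) (\<Phi> 1 w - \<Phi> 1 z) < e"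
    proof -
      have "(\<Phi> 1 b - \<Phi> 1 a) - (\<Phi> 1 w - \<Phi> 1 z) = (\<Phi> 1 b - \<Phi> 1 w) - (\<Phi> 1 a - \<Phi> 1 z)"
        by (simp add: algebra_simps)
      note eq = this
      have "dist (\<Phi> 1 b - \<Phi> 1 a) (\<Phi> 1 w - \<Phi> 1 z) \<le> dist (\<Phi> 1 b) (\<Phi> 1 w) + dist (\<Phi> 1 a) (\<Phi> 1 z)"
        unfolding dist_norm eq by (rule norm_triangle_ineq4)
      then show ?thesis using h1 h2 by linarith
    qed
    then have "\<Phi> 1 b - \<Phi> 1 a \<in> C" using e(2) interior_subset[of C] unfolding ball_def by (auto simp: dist_commute)
    have eqs: "\<Phi> 1 b = \<Phi> (1 + tm (r N)) q" "\<Phi> 1 a = \<Phi> (1 + \<sigma>) q"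
      by (simp_all add: a_def b_def flow_comp[OF fl])
    have "q \<in> pseudo_ordered_set \<Phi> C"
      unfolding pseudo_ordered_set_def cone_rel_def
    proof (intro CollectI conjI)
      show "\<exists>t1 t2. 0 \<le> t1 \<and> 0 \<le> t2 \<and> \<Phi> t1 q \<noteq> \<Phi> t2 q \<and> \<Phi> t1 q - \<Phi> t2 q \<in> C"
        using eqs ab1 \<open>\<Phi> 1 b - \<Phi> 1 a \<in> C\<close> sg tm[of "r N"]
        by (intro exI[of _ "1 + tm (r N)"] exI[of _ "1 + \<sigma>"]) auto
      show "\<exists>t. \<Phi> t q \<noteq> q" using eqs ab1 by metis
    qed
    then show "\<exists>q\<in>pseudo_ordered_set \<Phi> C. dist q x < \<epsilon>" using qx by blast
  qed
qed

end
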